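(* For all finite posets $P$ and $Q$, $$\operatorname{g\text{-}set}(P/Q)=\operatorname{g\text{-}set}(Q)\cup\{\operatorname{mex}_i(\operatorname{g\text{-}set}(Q)) : i\in\operatorname{g\text{-}set}(P)\}.$$
   Context: For a finite poset $P$ and $x\in P$ let $P_x:=\{y\in P: x\not\le y\}$. The g-number is defined recursively by $g(P):=\operatorname{mex}\{g(P_x):x\in P\}$ and the g-set by $\operatorname{g\text{-}set}(P):=\{g(P_x):x\in P\}$, where for a finite $A\subseteq\mathbb N$, $\operatorname{mex}A=\operatorname{mex}_0A$ is the least natural number not in $A$, and $\operatorname{mex}_iA:=\min(\mathbb N\setminus(A\cup\{\operatorname{mex}_0A,\dots,\operatorname{mex}_{i-1}A\}))$ is the $i$-th (0-indexed) least natural number not in $A$. The series union $P/Q$ is the disjoint union of $P$ and $Q$ with their orders kept and every point of $P$ placed above every point of $Q$. *)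

theory Defs
  imports Main
begin

text \<open>A finite poset is a pair (A, r) with r a relation (set of pairs) such that
  partial_order_on A r holds and A is finite.\<close>

definition mex :: "nat set \<Rightarrow> nat" where
  "mex S = (LEAST n. n \<notin> S)"

fun mexs :: "nat set \<Rightarrow> nat \<Rightarrow> nat set" where
  "mexs S 0 = {}"
| "mexs S (Suc i) = mexs S i \<union> {mex (S \<union> mexs S i)}"

definition mexi :: "nat set \<Rightarrow> nat \<Rightarrow> nat" where
  "mexi S i = mex (S \<union> mexs S i)"

definition subposet_carrier :: "'a set \<Rightarrow> ('a \<times> 'a) set \<Rightarrow> 'a \<Rightarrow> 'a set" where
  "subposet_carrier A r x = {y \<in> A. (x, y) \<notin> r}"

text \<open>g-number with a fuel argument; for a finite poset the fuel card A suffices,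
  since each passage to P_x removes at least x (reflexivity).\<close>
fun gnum_fuel :: "nat \<Rightarrow> 'a set \<Rightarrow> ('a \<times> 'a) set \<Rightarrow> nat" where
  "gnum_fuel 0 A r = 0"
| "gnum_fuel (Suc n) A r =
     mex ((\<lambda>x. let B = subposet_carrier A r x in gnum_fuel n B (r \<inter> (B \<times> B))) ` A)"

definition gnum :: "'a set \<Rightarrow> ('a \<times> 'a) set \<Rightarrow> nat" where
  "gnum A r = gnum_fuel (card A) A r"

definition gset :: "'a set \<Rightarrow> ('a \<times> 'a) set \<Rightarrow> nat set" where
  "gset A r = (\<lambda>x. let B = subposet_carrier A r x in gnum B (r \<inter> (B \<times> B))) ` A"

text \<open>Series union P/Q: P (tagged Inl) placed above Q (tagged Inr).\<close>
definition series_rel :: "('a \<times> 'a) set \<Rightarrow> ('b \<times> 'b) set \<Rightarrow> 'a set \<Rightarrow> 'b set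
    \<Rightarrow> (('a + 'b) \<times> ('a + 'b)) set" where
  "series_rel rP rQ A B =
     {(Inl a, Inl a') | a a'. (a, a') \<in> rP}
   \<union> {(Inr b, Inr b') | b b'. (b, b') \<in> rQ}
   \<union> {(Inr b, Inl a) | a b. a \<in> A \<and> b \<in> B}"

end

theory Submission
  imports Defs
begin

lemma mex_le: "n \<notin> X \<Longrightarrow> mex X \<le> n"
  unfolding mex_def by (rule Least_le)

lemma mex_notin: "finite X \<Longrightarrow> mex X \<notin> X"
  unfolding mex_def
  by (rule LeastI_ex) (metis ex_new_if_finite infinite_UNIV_nat)

lemma mex_less: "m < mex X \<Longrightarrow> m \<in> X"
  unfolding mex_def using not_less_Least by blast

lemma mex_empty: "mex {} = 0" unfolding mex_def by simp

lemma mexs_eq: "mexs S i = mexi S ` {..<i}"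
  by (induction i) (auto simp: mexi_def lessThan_Suc)

lemma mexs_finite: "finite (mexs S i)" by (simp add: mexs_eq)

lemma mexi_notin: "finite S \<Longrightarrow> mexi S i \<notin> S"
  using mex_notin[of "S \<union> mexs S i"] by (simp add: mexi_def mexs_finite)

lemma mexi_Suc_gt: "finite S \<Longrightarrow> mexi S i < mexi S (Suc i)"
proof -
  assume fS: "finite S"
  let ?X = "S \<union> mexs S i"
  have "\<forall>m \<le> mexi S i. m \<in> S \<union> mexs S (Suc i)"
    using mex_less[of _ ?X] by (auto simp: mexi_def le_less)
  moreover have "mexi S (Suc i) \<notin> S \<union> mexs S (Suc i)"
    using mex_notin[of "S \<union> mexs S (Suc i)"] fS by (simp add: mexi_def mexs_finite)
  ultimately show ?thesis by (meson not_le)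
qed

lemma mexi_mono: "finite S \<Longrightarrow> strict_mono (mexi S)"
  using mexi_Suc_gt strict_mono_Suc_iff by blast

lemma mexi_surj:
  assumes fS: "finite S" and n: "n \<notin> S"
  shows "\<exists>i. mexi S i = n"
proof (rule ccontr)
  assume "\<nexists>i. mexi S i = n"
  then have ne: "\<And>i. mexi S i \<noteq> n" by blast
  have "mexi S i < n" for i
  proof -
    have "n \<notin> S \<union> mexs S i" using n ne by (auto simp: mexs_eq)
    then have "mexi S i \<le> n" unfolding mexi_def by (rule mex_le)
    with ne[of i] show ?thesis by simp
  qed
  moreover have "n \<le> mexi S n" using mexi_mono[OF fS] strict_mono_imp_increasing by blast
  ultimately show False using less_le_not_le by blast
qed

lemma mex_image:
  assumes fS: "finite S" and fT: "finite T"
  shows "mex (S \<union> mexi S ` T) = mexi S (mex T)"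
proof -
  have sm: "strict_mono (mexi S)" using mexi_mono[OF fS] .
  show ?thesis unfolding mex_def[of "S \<union> mexi S ` T"]
  proof (rule Least_equality)
    show "mexi S (mex T) \<notin> S \<union> mexi S ` T"
    proof
      assume "mexi S (mex T) \<in> S \<union> mexi S ` T"
      then obtain j where "j \<in> T" "mexi S (mex T) = mexi S j"
        using mexi_notin[OF fS] by blast
      then have "j = mex T" using strict_mono_eq[OF sm] by metis
      then show False using mex_notin[OF fT] \<open>j \<in> T\<close> by simp
    qed
  next
    fix y assume y: "y \<notin> S \<union> mexi S ` T"
    show "mexi S (mex T) \<le> y"
    proof (rule ccontr)
      assume "\<not> ?thesis"
      then have lt: "y < mexi S (mex T)" by simp
      obtain j where j: "mexi S j = y" using mexi_surj[OF fS] y by blast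
      then have "j < mex T" using lt strict_mono_less[OF sm] by metis
      then have "j \<in> T" by (rule mex_less)
      then show False using y j by blast
    qed
  qed
qed

lemma sub_card:
  assumes "finite A" "x \<in> A" "(x,x) \<in> r"
  shows "card (subposet_carrier A r x) < card A"
  using assms by (intro psubset_card_mono) (auto simp: subposet_carrier_def)

lemma sub_finite: "finite A \<Longrightarrow> finite (subposet_carrier A r x)"
  by (simp add: subposet_carrier_def)

lemma sub_refl: "\<forall>x\<in>A. (x,x) \<in> r \<Longrightarrow> \<forall>y\<in>subposet_carrier A r x. (y,y) \<in> r \<inter> (subposet_carrier A r x \<times> subposet_carrier A r x)"
  by (auto simp: subposet_carrier_def)

lemma fuel:
  "finite A \<Longrightarrow> \<forall>x\<in>A. (x,x)\<in>r \<Longrightarrow> card A \<le> n \<Longrightarrow> card A \<le> m \<Longrightarrow> gnum_fuel n A r = gnum_fuel m A r"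
proof (induction n arbitrary: m A r)
  case 0
  then have "A = {}" by simp
  then show ?case by (cases m) (auto simp: mex_empty)
next
  case (Suc n)
  show ?case
  proof (cases "A = {}")
    case True
    then show ?thesis by (cases m) (auto simp: mex_empty)
  next
    case False
    then have "card A > 0" using Suc.prems(1) by auto
    then obtain m' where m: "m = Suc m'" using Suc.prems(4) by (cases m) auto
    show ?thesis unfolding m gnum_fuel.simps Let_def
    proof (rule arg_cong[where f=mex], rule image_cong[OF refl])
      fix x assume x: "x \<in> A"
      let ?B = "subposet_carrier A r x"
      have c: "card ?B < card A" using sub_card[OF Suc.prems(1) x] Suc.prems(2) x by blast
      show "gnum_fuel n ?B (r \<inter> ?B \<times> ?B) = gnum_fuel m' ?B (r \<inter> ?B \<times> ?B)"
        apply (rule Suc.IH)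
        using sub_finite[OF Suc.prems(1)] sub_refl[OF Suc.prems(2)] c Suc.prems(3,4) m by auto
    qed
  qed
qed

lemma gnum_rec:
  assumes "finite A" "\<forall>x\<in>A. (x,x)\<in>r"
  shows "gnum A r = mex (gset A r)"
proof (cases "A = {}")
  case True
  then show ?thesis by (simp add: gnum_def gset_def mex_empty)
next
  case False
  then obtain k where k: "card A = Suc k" using assms(1)
    by (metis card_0_eq not0_implies_Suc)
  show ?thesis unfolding gnum_def k gnum_fuel.simps gset_def Let_def
  proof (rule arg_cong[where f=mex], rule image_cong[OF refl])
    fix x assume x: "x \<in> A"
    let ?B = "subposet_carrier A r x"
    have c: "card ?B < card A" using sub_card[OF assms(1) x] assms(2) x by blast
    show "gnum_fuel k ?B (r \<inter> ?B \<times> ?B) = gnum_fuel (card ?B) ?B (r \<inter> ?B \<times> ?B)"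
      apply (rule fuel)
      using sub_finite[OF assms(1)] sub_refl[OF assms(2)] c k by auto
  qed
qed

lemma sub_inj: "inj f \<Longrightarrow> subposet_carrier (f ` A) (map_prod f f ` r) (f x) = f ` subposet_carrier A r x"
  by (auto simp: subposet_carrier_def inj_eq)

lemma rel_inj: "inj f \<Longrightarrow> map_prod f f ` r \<inter> (f ` C \<times> f ` C) = map_prod f f ` (r \<inter> C \<times> C)"
  by (auto simp: inj_eq)

lemma gnum_inj: "inj f \<Longrightarrow> gnum_fuel n (f ` A) (map_prod f f ` r) = gnum_fuel n A r"
proof (induction n arbitrary: A r)
  case 0
  then show ?case by simp
next
  case (Suc n)
  show ?case unfolding gnum_fuel.simps Let_def image_image
  proof (rule arg_cong[where f=mex], rule image_cong[OF refl])
    fix x assume "x \<in> A"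
    show "gnum_fuel n (subposet_carrier (f ` A) (map_prod f f ` r) (f x))
          (map_prod f f ` r \<inter> subposet_carrier (f ` A) (map_prod f f ` r) (f x) \<times> subposet_carrier (f ` A) (map_prod f f ` r) (f x))
        = gnum_fuel n (subposet_carrier A r x) (r \<inter> subposet_carrier A r x \<times> subposet_carrier A r x)"
      unfolding sub_inj[OF Suc.prems] rel_inj[OF Suc.prems] by (rule Suc.IH[OF Suc.prems])
  qed
qed

lemma gnum_inj': "inj f \<Longrightarrow> gnum (f ` A) (map_prod f f ` r) = gnum A r"
  unfolding gnum_def by (simp add: card_image inj_on_subset gnum_inj)

lemma sub_Inl: "subposet_carrier (A <+> B) (series_rel rP rQ A B) (Inl a) = subposet_carrier A rP a <+> B"
  by (auto simp: subposet_carrier_def series_rel_def)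

lemma rel_Inl: "rQ \<subseteq> B \<times> B \<Longrightarrow> C \<subseteq> A \<Longrightarrow>
   series_rel rP rQ A B \<inter> ((C <+> B) \<times> (C <+> B)) = series_rel (rP \<inter> C \<times> C) rQ C B"
  by (auto simp: series_rel_def)

lemma sub_Inr: "b \<in> B \<Longrightarrow> subposet_carrier (A <+> B) (series_rel rP rQ A B) (Inr b) = Inr ` subposet_carrier B rQ b"
  by (auto simp: subposet_carrier_def series_rel_def)

lemma rel_Inr: "series_rel rP rQ A B \<inter> (Inr ` D \<times> Inr ` D) = map_prod Inr Inr ` (rQ \<inter> D \<times> D)"
  by (auto simp: series_rel_def)

lemma gset_series:
  assumes "rQ \<subseteq> B \<times> B"
  shows "gset (A <+> B) (series_rel rP rQ A B) = gset B rQ \<union>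
     (\<lambda>a. let C = subposet_carrier A rP a in gnum (C <+> B) (series_rel (rP \<inter> C \<times> C) rQ C B)) ` A"
proof -
  have 1: "(\<lambda>x. let C = subposet_carrier (A <+> B) (series_rel rP rQ A B) x in
       gnum C (series_rel rP rQ A B \<inter> C \<times> C)) ` Inr ` B = gset B rQ"
    unfolding gset_def image_image Let_def
    by (rule image_cong[OF refl]) (simp add: sub_Inr rel_Inr gnum_inj')
  have 2: "(\<lambda>x. let C = subposet_carrier (A <+> B) (series_rel rP rQ A B) x in
       gnum C (series_rel rP rQ A B \<inter> C \<times> C)) ` Inl ` A =
     (\<lambda>a. let C = subposet_carrier A rP a in gnum (C <+> B) (series_rel (rP \<inter> C \<times> C) rQ C B)) ` A"
    unfolding image_image Let_def
  proof (rule image_cong[OF refl])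
    fix x assume "x \<in> A"
    have "subposet_carrier A rP x \<subseteq> A" by (auto simp: subposet_carrier_def)
    then show "gnum (subposet_carrier (A <+> B) (series_rel rP rQ A B) (Inl x))
          (series_rel rP rQ A B \<inter> subposet_carrier (A <+> B) (series_rel rP rQ A B) (Inl x) \<times> subposet_carrier (A <+> B) (series_rel rP rQ A B) (Inl x))
       = gnum (subposet_carrier A rP x <+> B) (series_rel (rP \<inter> subposet_carrier A rP x \<times> subposet_carrier A rP x) rQ (subposet_carrier A rP x) B)"
      by (simp only: sub_Inl rel_Inl[OF assms])
  qed
  have e: "gset (A <+> B) (series_rel rP rQ A B) = (\<lambda>x. let C = subposet_carrier (A <+> B) (series_rel rP rQ A B) x in
       gnum C (series_rel rP rQ A B \<inter> C \<times> C)) ` (Inl ` A \<union> Inr ` B)"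
    unfolding gset_def Plus_def ..
  show ?thesis unfolding e image_Un 1 2 by (rule Un_commute)
qed

lemma key:
  "finite A \<Longrightarrow> \<forall>x\<in>A. (x,x)\<in>rP \<Longrightarrow> finite B \<Longrightarrow> \<forall>x\<in>B. (x,x)\<in>rQ \<Longrightarrow> rQ \<subseteq> B \<times> B \<Longrightarrow>
   gset (A <+> B) (series_rel rP rQ A B) = gset B rQ \<union> mexi (gset B rQ) ` gset A rP \<and>
   gnum (A <+> B) (series_rel rP rQ A B) = mexi (gset B rQ) (gnum A rP)"
proof (induction "card A" arbitrary: A rP rule: less_induct)
  case less
  let ?S = "gset B rQ"
  have fS: "finite ?S" using less.prems(3) by (simp add: gset_def)
  have fT: "finite (gset A rP)" using less.prems(1) by (simp add: gset_def)
  have h:  "(\<lambda>a. let C = subposet_carrier A rP a in gnum (C <+> B) (series_rel (rP \<inter> C \<times> C) rQ C B)) ` A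
        = mexi ?S ` gset A rP"
      unfolding gset_def[of A rP] image_image Let_def
    proof (rule image_cong[OF refl])
      fix x assume x: "x \<in> A"
      let ?C = "subposet_carrier A rP x"
      have c: "card ?C < card A" using sub_card[OF less.prems(1) x] less.prems(2) x by blast
      show "gnum (?C <+> B) (series_rel (rP \<inter> ?C \<times> ?C) rQ ?C B) = mexi ?S (gnum ?C (rP \<inter> ?C \<times> ?C))"
        using less.hyps[OF c sub_finite[OF less.prems(1)] sub_refl[OF less.prems(2)] less.prems(3-5)]
        by blast
    qed
  have g1: "gset (A <+> B) (series_rel rP rQ A B) = ?S \<union> mexi ?S ` gset A rP"
    unfolding gset_series[OF less.prems(5)] h ..
  have fin: "finite (A <+> B)" using less.prems(1,3) by simp
  have rf: "\<forall>x\<in>A <+> B. (x,x) \<in> series_rel rP rQ A B"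
    using less.prems(2,4) by (auto simp: series_rel_def)
  have "gnum (A <+> B) (series_rel rP rQ A B) = mexi ?S (gnum A rP)"
    unfolding gnum_rec[OF fin rf] g1 mex_image[OF fS fT] gnum_rec[OF less.prems(1,2)] ..
  with g1 show ?case by blast
qed

theorem mainTheorem6:
  fixes A :: "'a set" and rP :: "('a \<times> 'a) set"
    and B :: "'b set" and rQ :: "('b \<times> 'b) set"
  assumes "finite A" and "partial_order_on A rP"
    and "finite B" and "partial_order_on B rQ"
  shows "gset (A <+> B) (series_rel rP rQ A B)
         = gset B rQ \<union> {mexi (gset B rQ) i | i. i \<in> gset A rP}"
proof -
  have p: "\<forall>x\<in>A. (x,x)\<in>rP" "\<forall>x\<in>B. (x,x)\<in>rQ" "rQ \<subseteq> B \<times> B"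
    using assms(2,4) by (auto simp: partial_order_on_def preorder_on_def refl_on_def)
  have "{mexi (gset B rQ) i | i. i \<in> gset A rP} = mexi (gset B rQ) ` gset A rP" by blast
  then show ?thesis using key[OF assms(1) p(1) assms(3) p(2,3)] by simp
qed

end
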